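(* Let $G$ be a finite abelian group and $\Phi$ a normalized $3$-cocycle on $G$. If $V$ and $W$ are simple objects of ${}^{\mathbbm{k}G}_{\mathbbm{k}G}\mathcal{YD}^{\Phi}$ with $g_V=g_W$, then $\dim V=\dim W$.
   Context: $\mathbbm{k}$ is algebraically closed of characteristic zero. For $g\in G$, $\widetilde{\Phi}_g(x,y)=\frac{\Phi(g,x,y)\Phi(x,y,g)}{\Phi(x,g,y)}$. The braided tensor category ${}^{\mathbbm{k}G}_{\mathbbm{k}G}\mathcal{YD}^{\Phi}$ has objects the $G$-graded spaces $V=\bigoplus_gV_g$ with operators $e\triangleright-$ preserving each $V_g$, $1\triangleright v=v$, $e\triangleright(f\triangleright v)=\widetilde{\Phi}_g(e,f)(ef)\triangleright v$ for $v\in V_g$; tensor product: degree $gh$, $e\triangleright(X\otimes Y)=\widetilde{\Phi}_e(g,h)(e\triangleright X)\otimes(e\triangleright Y)$; associator $(X\otimes Y)\otimes Z\mapsto\Phi(e,f,g)^{-1}X\otimes(Y\otimes Z)$; braiding $X\otimes Y\mapsto(e\triangleright Y)\otimes X$. A simple object $V$ is concentrated in a single degree, denoted $g_V$. *)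

theory Defs
  imports Main "HOL-Computational_Algebra.Polynomial"
begin

text \<open>The finite abelian group G is a type 'g of class ab_group_add and finite,
written additively: the unit 1 of G is 0, the product ef is e + f.\<close>

definition normalized_3cocycle :: "('g::ab_group_add \<Rightarrow> 'g \<Rightarrow> 'g \<Rightarrow> 'k::field) \<Rightarrow> bool" where
  "normalized_3cocycle \<Phi> \<longleftrightarrow>
     (\<forall>x y z. \<Phi> x y z \<noteq> 0) \<and>
     (\<forall>e f g h. \<Phi> (e + f) g h * \<Phi> e f (g + h) = \<Phi> e f g * \<Phi> e (f + g) h * \<Phi> f g h) \<and>
     (\<forall>x y. \<Phi> 0 x y = 1 \<and> \<Phi> x 0 y = 1 \<and> \<Phi> x y 0 = 1)"

definition Phi_tilde :: "('g::ab_group_add \<Rightarrow> 'g \<Rightarrow> 'g \<Rightarrow> 'k::field) \<Rightarrow> 'g \<Rightarrow> 'g \<Rightarrow> 'g \<Rightarrow> 'k" where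
  "Phi_tilde \<Phi> g x y = \<Phi> g x y * \<Phi> x y g / \<Phi> x g y"

text \<open>An object of the Yetter-Drinfeld category: a subspace V of a k-vector space
(scalar multiplication sc) which is the internal direct sum of homogeneous
components cmp g (g in G), together with operators act e (the action e \<triangleright> -).\<close>

definition yd_object ::
  "('k::field \<Rightarrow> 'v::ab_group_add \<Rightarrow> 'v) \<Rightarrow> ('g::{ab_group_add,finite} \<Rightarrow> 'g \<Rightarrow> 'g \<Rightarrow> 'k)
   \<Rightarrow> 'v set \<Rightarrow> ('g \<Rightarrow> 'v set) \<Rightarrow> ('g \<Rightarrow> 'v \<Rightarrow> 'v) \<Rightarrow> bool" where
  "yd_object sc \<Phi> V cmp act \<longleftrightarrow>
     vector_space sc \<and>
     (\<forall>g. module.subspace sc (cmp g) \<and> cmp g \<subseteq> V) \<and>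
     V = {sum x UNIV | x. \<forall>g. x g \<in> cmp g} \<and>
     (\<forall>x. (\<forall>g. x g \<in> cmp g) \<and> sum x UNIV = 0 \<longrightarrow> (\<forall>g. x g = 0)) \<and>
     (\<forall>e g v. v \<in> cmp g \<longrightarrow> act e v \<in> cmp g) \<and>
     (\<forall>e c. \<forall>u\<in>V. \<forall>v\<in>V. act e (sc c u + v) = sc c (act e u) + act e v) \<and>
     (\<forall>v\<in>V. act 0 v = v) \<and>
     (\<forall>g e f. \<forall>v\<in>cmp g. act e (act f v) = sc (Phi_tilde \<Phi> g e f) (act (e + f) v))"

definition yd_subobject ::
  "('k::field \<Rightarrow> 'v::ab_group_add \<Rightarrow> 'v) \<Rightarrow> 'v set \<Rightarrow> 'v set \<Rightarrow> ('g::{ab_group_add,finite} \<Rightarrow> 'v set)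
   \<Rightarrow> ('g \<Rightarrow> 'v \<Rightarrow> 'v) \<Rightarrow> bool" where
  "yd_subobject sc U V cmp act \<longleftrightarrow>
     module.subspace sc U \<and> U \<subseteq> V \<and>
     U = {sum x UNIV | x. \<forall>g. x g \<in> U \<inter> cmp g} \<and>
     (\<forall>e. \<forall>u\<in>U. act e u \<in> U)"

definition yd_simple ::
  "('k::field \<Rightarrow> 'v::ab_group_add \<Rightarrow> 'v) \<Rightarrow> ('g::{ab_group_add,finite} \<Rightarrow> 'g \<Rightarrow> 'g \<Rightarrow> 'k)
   \<Rightarrow> 'v set \<Rightarrow> ('g \<Rightarrow> 'v set) \<Rightarrow> ('g \<Rightarrow> 'v \<Rightarrow> 'v) \<Rightarrow> bool" where
  "yd_simple sc \<Phi> V cmp act \<longleftrightarrow>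
     yd_object sc \<Phi> V cmp act \<and> V \<noteq> {0} \<and>
     (\<forall>U. yd_subobject sc U V cmp act \<longrightarrow> U = {0} \<or> U = V)"

text \<open>The degree g_V of a simple object: the unique degree in which it is concentrated.\<close>

definition yd_degree :: "('g \<Rightarrow> 'v set) \<Rightarrow> 'v set \<Rightarrow> 'g" where
  "yd_degree cmp V = (THE g. cmp g = V)"

end

theory Submission
  imports Defs "HOL-Library.Function_Algebras"
begin


lemma lin_sum:
  assumes vs1: "vector_space s1" and vs2: "vector_space s2"
    and sub: "module.subspace s1 V"
    and add: "\<forall>u\<in>V. \<forall>v\<in>V. \<phi> (u + v) = \<phi> u + \<phi> v"
    and hom: "\<forall>c. \<forall>v\<in>V. \<phi> (s1 c v) = s2 c (\<phi> v)"
    and t: "finite t" "t \<subseteq> V"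
  shows "\<phi> (\<Sum>a\<in>t. s1 (r a) a) = (\<Sum>a\<in>t. s2 (r a) (\<phi> a))"
  using t
proof (induction t rule: finite_induct)
  case empty
  interpret v1: vector_space s1 by fact
  have "0 \<in> V" using sub by (simp add: v1.subspace_0)
  then have "\<phi> 0 = \<phi> 0 + \<phi> 0" using add by (metis add_0)
  then show ?case by simp
next
  case (insert x F)
  interpret v1: vector_space s1 by fact
  have "(\<Sum>a\<in>F. s1 (r a) a) \<in> V"
    using insert sub by (intro v1.subspace_sum[OF sub]) (auto intro: v1.subspace_scale[OF sub])
  moreover have "s1 (r x) x \<in> V" using insert sub v1.subspace_scale by auto
  ultimately show ?case using insert add hom by simp
qed

lemma dim_transfer:
  assumes vs1: "vector_space s1" and vs2: "vector_space s2"
    and sub: "module.subspace s1 V"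
    and add: "\<forall>u\<in>V. \<forall>v\<in>V. \<phi> (u + v) = \<phi> u + \<phi> v"
    and hom: "\<forall>c. \<forall>v\<in>V. \<phi> (s1 c v) = s2 c (\<phi> v)"
    and inj: "inj_on \<phi> V" and img: "\<phi> ` V = W"
  shows "vector_space.dim s1 V = vector_space.dim s2 W"
proof -
  interpret v1: vector_space s1 by fact
  interpret v2: vector_space s2 by fact
  obtain B where B: "B \<subseteq> V" "v1.independent B" "V \<subseteq> v1.span B" "card B = v1.dim V"
    using v1.basis_exists by blast
  have z: "\<phi> 0 = 0" using lin_sum[OF vs1 vs2 sub add hom, of "{}"] by simp
  have "v2.independent (\<phi> ` B)"
  proof
    assume "v2.dependent (\<phi> ` B)"
    then obtain t' u where t': "finite t'" "t' \<subseteq> \<phi> ` B" "(\<Sum>v\<in>t'. s2 (u v) v) = 0" "\<exists>v\<in>t'. u v \<noteq> 0"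
      unfolding v2.dependent_explicit by blast
    obtain t where t: "t \<subseteq> B" "inj_on \<phi> t" "t' = \<phi> ` t" using t'(2) unfolding subset_image_inj by blast
    have ft: "finite t" using t(2,3) t'(1) by (simp add: finite_image_iff)
    have tV: "t \<subseteq> V" using t B by blast
    have "\<phi> (\<Sum>a\<in>t. s1 (u (\<phi> a)) a) = (\<Sum>a\<in>t. s2 (u (\<phi> a)) (\<phi> a))"
      by (rule lin_sum[OF vs1 vs2 sub add hom ft tV])
    also have "\<dots> = 0" using t'(3) t sum.reindex[OF t(2), of "\<lambda>v. s2 (u v) v"] by simp
    finally have e: "\<phi> (\<Sum>a\<in>t. s1 (u (\<phi> a)) a) = \<phi> 0" using z by simp
    have "(\<Sum>a\<in>t. s1 (u (\<phi> a)) a) \<in> V"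
      using t B by (intro v1.subspace_sum[OF sub]) (auto intro: v1.subspace_scale[OF sub])
    then have s0: "(\<Sum>a\<in>t. s1 (u (\<phi> a)) a) = 0"
      using inj_onD[OF inj e] v1.subspace_0[OF sub] by simp
    moreover have nz: "\<exists>a\<in>t. u (\<phi> a) \<noteq> 0" using t'(4) t by blast
    have "v1.dependent B" unfolding v1.dependent_explicit
      by (rule exI[of _ t], rule exI[of _ "\<lambda>a. u (\<phi> a)"]) (use ft t(1) s0 nz in simp)
    then show False using B by blast
  qed
  moreover have "\<phi> ` B \<subseteq> W" using B img by blast
  moreover have "W \<subseteq> v2.span (\<phi> ` B)"
  proof
    fix w assume "w \<in> W"
    then obtain v where v: "v \<in> V" "w = \<phi> v" using img by blast
    then obtain t r where tr: "finite t" "t \<subseteq> B" "v = (\<Sum>a\<in>t. s1 (r a) a)"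
      using B(3) unfolding v1.span_explicit by blast
    have tV: "t \<subseteq> V" using tr B by blast
    have "w = (\<Sum>a\<in>t. s2 (r a) (\<phi> a))"
      unfolding v tr(3) by (rule lin_sum[OF vs1 vs2 sub add hom tr(1) tV])
    also have "\<dots> \<in> v2.span (\<phi> ` B)"
      using tr by (intro v2.span_sum v2.span_scale v2.span_base) auto
    finally show "w \<in> v2.span (\<phi> ` B)" .
  qed
  ultimately have "card (\<phi> ` B) = v2.dim W" by (intro v2.basis_card_eq_dim) auto
  moreover have "card (\<phi> ` B) = card B" using inj_on_subset[OF inj B(1)] by (rule card_image)
  ultimately show ?thesis using B by simp
qed


locale opS = vector_space sm for sm :: "'k::alg_closed_field \<Rightarrow> 'a::ab_group_add \<Rightarrow> 'a" +
  fixes A :: "'a \<Rightarrow> 'a" and S :: "'a set"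
  assumes subS: "subspace S"
    and AS: "\<And>x. x \<in> S \<Longrightarrow> A x \<in> S"
    and Aadd: "\<And>x y. x \<in> S \<Longrightarrow> y \<in> S \<Longrightarrow> A (x + y) = A x + A y"
    and Asc: "\<And>c x. x \<in> S \<Longrightarrow> A (sm c x) = sm c (A x)"
begin

lemma A0: "A 0 = 0"
  using Aadd[of 0 0] subspace_0[OF subS] by simp

lemma Apow_S: "x \<in> S \<Longrightarrow> (A^^i) x \<in> S"
  by (induction i) (auto intro: AS)

lemma Apow_add: "x \<in> S \<Longrightarrow> y \<in> S \<Longrightarrow> (A^^i) (x + y) = (A^^i) x + (A^^i) y"
  by (induction i) (auto simp: Aadd Apow_S)

lemma Apow_sc: "x \<in> S \<Longrightarrow> (A^^i) (sm c x) = sm c ((A^^i) x)"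
  by (induction i) (auto simp: Asc Apow_S)

lemma A_sum: "(\<And>i. i \<in> I \<Longrightarrow> f i \<in> S) \<Longrightarrow> A (sum f I) = (\<Sum>i\<in>I. A (f i))"
proof (induction I rule: infinite_finite_induct)
  case (insert i F)
  have "sum f F \<in> S" using insert by (intro subspace_sum[OF subS]) auto
  then show ?case using insert by (simp add: Aadd)
qed (auto simp: A0)

definition peval :: "'k poly \<Rightarrow> 'a \<Rightarrow> 'a" where
  "peval p x = (\<Sum>i\<le>degree p. sm (coeff p i) ((A^^i) x))"

lemma peval_bound: "degree p \<le> n \<Longrightarrow> peval p x = (\<Sum>i\<le>n. sm (coeff p i) ((A^^i) x))"
  unfolding peval_def
  by (intro sum.mono_neutral_left) (auto simp: coeff_eq_0)

lemma peval_S: "x \<in> S \<Longrightarrow> peval p x \<in> S"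
  unfolding peval_def by (intro subspace_sum[OF subS] subspace_scale[OF subS] Apow_S)

lemma peval_add: "peval (p + q) x = peval p x + peval q x"
proof -
  let ?n = "max (degree p) (degree q)"
  have "peval (p + q) x = (\<Sum>i\<le>?n. sm (coeff (p+q) i) ((A^^i) x))"
    by (rule peval_bound) (simp add: degree_add_le)
  also have "\<dots> = (\<Sum>i\<le>?n. sm (coeff p i) ((A^^i) x)) + (\<Sum>i\<le>?n. sm (coeff q i) ((A^^i) x))"
    by (simp add: scale_left_distrib sum.distrib)
  also have "\<dots> = peval p x + peval q x"
    using peval_bound[of p ?n x] peval_bound[of q ?n x] by simp
  finally show ?thesis .
qed

lemma peval_smult: "peval (smult c p) x = sm c (peval p x)"
proof -
  have "peval (smult c p) x = (\<Sum>i\<le>degree p. sm (coeff (smult c p) i) ((A^^i) x))"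
    by (rule peval_bound) simp
  also have "\<dots> = sm c (peval p x)"
    by (simp add: peval_def scale_sum_right)
  finally show ?thesis .
qed

lemma peval_pCons0: "x \<in> S \<Longrightarrow> peval (pCons 0 p) x = A (peval p x)"
proof -
  assume x: "x \<in> S"
  have "peval (pCons 0 p) x = (\<Sum>i\<le>Suc (degree p). sm (coeff (pCons 0 p) i) ((A^^i) x))"
    by (rule peval_bound) (simp add: degree_pCons_le)
  also have "\<dots> = (\<Sum>i\<le>degree p. sm (coeff p i) ((A^^Suc i) x))"
    by (subst sum.atMost_Suc_shift) simp
  also have "\<dots> = A (peval p x)"
    unfolding peval_def using x
    by (subst A_sum) (auto simp: Asc Apow_S subspace_scale[OF subS])
  finally show ?thesis .
qed

lemma peval_const: "peval [:c:] x = sm c x"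
  by (simp add: peval_def)

lemma peval_commA: "x \<in> S \<Longrightarrow> peval p (A x) = A (peval p x)"
  unfolding peval_def
  by (subst A_sum) (auto simp: Asc Apow_S subspace_scale[OF subS] funpow_swap1)

lemma peval_xadd: "x \<in> S \<Longrightarrow> y \<in> S \<Longrightarrow> peval p (x + y) = peval p x + peval p y"
  unfolding peval_def by (simp add: Apow_add scale_right_distrib sum.distrib)

lemma peval_xsc: "x \<in> S \<Longrightarrow> peval p (sm c x) = sm c (peval p x)"
  unfolding peval_def by (simp add: Apow_sc scale_sum_right mult.commute)

lemma peval_lin_factor:
  assumes x: "x \<in> S"
  shows "peval ([:-c, 1:] * q) x = peval q (A x - sm c x)"
proof -
  have eq: "[:-c, 1:] * q = smult (-c) q + pCons 0 q" by simp
  have "peval ([:-c, 1:] * q) x = sm (-c) (peval q x) + A (peval q x)"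
    unfolding eq peval_add peval_smult peval_pCons0[OF x] by (rule refl)
  also have "\<dots> = peval q (A x) + peval q (sm (-c) x)"
    by (simp only: peval_commA[OF x] peval_xsc[OF x] add.commute)
  also have "\<dots> = peval q (A x + sm (-c) x)"
    by (rule peval_xadd[symmetric]) (use x AS subspace_scale[OF subS, of x "-c"] in auto)
  finally show ?thesis by simp
qed

lemma eigen_from_poly:
  fixes p :: "'k poly"
  shows "p \<noteq> 0 \<Longrightarrow> x \<in> S \<Longrightarrow> x \<noteq> 0 \<Longrightarrow> peval p x = 0 \<Longrightarrow> \<exists>y c. y \<in> S \<and> y \<noteq> 0 \<and> A y = sm c y"
proof (induction "degree p" arbitrary: p x rule: less_induct)
  case less
  show ?case
  proof (cases "degree p = 0")
    case True
    then obtain a where "p = [:a:]" by (metis degree_eq_zeroE)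
    with less show ?thesis by (simp add: peval_const)
  next
    case False
    then obtain c where "poly p c = 0" using alg_closed_imp_poly_has_root by blast
    then obtain q where q: "p = [:-c, 1:] * q" unfolding poly_eq_0_iff_dvd by (auto elim: dvdE)
    have qnz: "q \<noteq> 0" using less.prems q by auto
    have d: "degree ([:-c,1:]*q) = degree [:-c,1:] + degree q" by (rule degree_mult_eq) (use qnz in auto)
    have dq: "degree q < degree p" using d q by (simp del: mult_pCons_left)
    define y where "y = A x - sm c x"
    have yS: "y \<in> S" unfolding y_def using less.prems by (intro subspace_diff[OF subS] AS subspace_scale[OF subS])
    show ?thesis
    proof (cases "y = 0")
      case True
      then show ?thesis using less.prems unfolding y_def by auto
    next
      case False
      have "peval q y = 0" using less.prems q peval_lin_factor unfolding y_def by metis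
      then show ?thesis using less.hyps[OF dq qnz yS False] by blast
    qed
  qed
qed

lemma peval_monom: "x \<in> S \<Longrightarrow> peval (monom 1 m) x = (A^^m) x"
proof (induction m)
  case 0 then show ?case by (simp add: peval_def)
next
  case (Suc m) then show ?case by (simp add: monom_Suc peval_pCons0)
qed

lemma eigen_exists:
  assumes "m > 0" "\<And>x. x \<in> S \<Longrightarrow> (A^^m) x = x" "x \<in> S" "x \<noteq> 0"
  shows "\<exists>y (c::'k). y \<in> S \<and> y \<noteq> 0 \<and> A y = sm c y"
proof -
  let ?p = "monom (1::'k) m + smult (-1) 1"
  have "?p \<noteq> 0"
  proof
    assume "?p = 0"
    then have "coeff ?p m = 0" by simp
    then show False using assms(1) by (cases m) simp_all
  qed
  moreover have "peval ?p x = 0"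
    using assms by (simp add: peval_add peval_smult peval_monom peval_const)
  ultimately show ?thesis using eigen_from_poly assms by blast
qed

end


lemma common_eigen:
  fixes sm :: "'k::alg_closed_field \<Rightarrow> 'a::ab_group_add \<Rightarrow> 'a" and \<rho> :: "'g \<Rightarrow> 'a \<Rightarrow> 'a"
  assumes vs: "vector_space sm"
    and add: "\<And>e x y. x \<in> T \<Longrightarrow> y \<in> T \<Longrightarrow> \<rho> e (x + y) = \<rho> e x + \<rho> e y"
    and sc: "\<And>e c x. x \<in> T \<Longrightarrow> \<rho> e (sm c x) = sm c (\<rho> e x)"
    and comm: "\<And>e f x. x \<in> T \<Longrightarrow> \<rho> e (\<rho> f x) = \<rho> f (\<rho> e x)"
    and per: "\<And>e. \<exists>m>0. \<forall>x\<in>T. (\<rho> e ^^ m) x = x"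
    and fin: "finite E"
  shows "module.subspace sm S \<Longrightarrow> S \<subseteq> T \<Longrightarrow> (\<forall>e. \<forall>x\<in>S. \<rho> e x \<in> S) \<Longrightarrow> x0 \<in> S \<Longrightarrow> x0 \<noteq> 0
    \<Longrightarrow> \<exists>y\<in>S. y \<noteq> 0 \<and> (\<forall>e\<in>E. \<exists>c. \<rho> e y = sm c y)"
  using fin
proof (induction E arbitrary: S x0 rule: finite_induct)
  case empty
  then show ?case by blast
next
  case (insert e E)
  interpret vector_space sm by fact
  interpret o: opS sm "\<rho> e" S
    using insert.prems add sc by unfold_locales (auto simp: subset_iff)
  obtain m where m: "m > 0" "\<forall>x\<in>T. (\<rho> e ^^ m) x = x" using per by blast
  obtain y c where y: "y \<in> S" "y \<noteq> 0" "\<rho> e y = sm c y"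
    using o.eigen_exists[of m x0] m insert.prems by blast
  define S' where "S' = {z\<in>S. \<rho> e z = sm c z}"
  have z0: "\<rho> e 0 = 0" using o.A0 .
  have sub': "subspace S'"
    unfolding subspace_def S'_def
  proof (intro conjI ballI allI)
    show "0 \<in> {z \<in> S. \<rho> e z = sm c z}" using z0 subspace_0[OF insert.prems(1)] by simp
  next
    fix u v assume "u \<in> {z \<in> S. \<rho> e z = sm c z}" "v \<in> {z \<in> S. \<rho> e z = sm c z}"
    then show "u + v \<in> {z \<in> S. \<rho> e z = sm c z}"
      using o.Aadd subspace_add[OF insert.prems(1)] by (simp add: scale_right_distrib)
  next
    fix a u assume "u \<in> {z \<in> S. \<rho> e z = sm c z}"
    then show "sm a u \<in> {z \<in> S. \<rho> e z = sm c z}"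
      using o.Asc subspace_scale[OF insert.prems(1)] by (simp add: scale_left_commute)
  qed
  have inv': "\<forall>f. \<forall>x\<in>S'. \<rho> f x \<in> S'"
  proof (intro allI ballI)
    fix f x assume x: "x \<in> S'"
    then have xS: "x \<in> S" and ex: "\<rho> e x = sm c x" unfolding S'_def by auto
    have "\<rho> e (\<rho> f x) = \<rho> f (\<rho> e x)" using comm xS insert.prems(2) by blast
    also have "\<dots> = sm c (\<rho> f x)" using ex sc xS insert.prems(2) by auto
    finally show "\<rho> f x \<in> S'" unfolding S'_def using insert.prems(3) xS by blast
  qed
  have "S' \<subseteq> T" using insert.prems(2) unfolding S'_def by blast
  moreover have "y \<in> S'" using y unfolding S'_def by blast
  ultimately obtain w where w: "w \<in> S'" "w \<noteq> 0" "\<forall>f\<in>E. \<exists>c. \<rho> f w = sm c w"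
    using insert.IH[OF sub' _ inv' _ y(2)] by blast
  then show ?case unfolding S'_def by auto
qed



lemma yd_objectD0: "yd_object sc \<Phi> V cmp act \<Longrightarrow> vector_space sc"
  unfolding yd_object_def by (elim conjE) assumption

lemma yd_objectD1: "yd_object sc \<Phi> V cmp act \<Longrightarrow> \<forall>g. module.subspace sc (cmp g) \<and> cmp g \<subseteq> V"
  unfolding yd_object_def by (elim conjE) assumption

lemma yd_objectD2: "yd_object sc \<Phi> V cmp act \<Longrightarrow> V = {sum x UNIV | x. \<forall>g. x g \<in> cmp g}"
  unfolding yd_object_def by (elim conjE) assumption

lemma yd_objectD3: "yd_object sc \<Phi> V cmp act \<Longrightarrow> \<forall>x. (\<forall>g. x g \<in> cmp g) \<and> sum x UNIV = 0 \<longrightarrow> (\<forall>g. x g = 0)"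
  unfolding yd_object_def by (elim conjE) assumption

lemma yd_objectD4: "yd_object sc \<Phi> V cmp act \<Longrightarrow> \<forall>e g v. v \<in> cmp g \<longrightarrow> act e v \<in> cmp g"
  unfolding yd_object_def by (elim conjE) assumption

lemma yd_objectD5: "yd_object sc \<Phi> V cmp act \<Longrightarrow> \<forall>e c. \<forall>u\<in>V. \<forall>v\<in>V. act e (sc c u + v) = sc c (act e u) + act e v"
  unfolding yd_object_def by (elim conjE) assumption

lemma yd_objectD6: "yd_object sc \<Phi> V cmp act \<Longrightarrow> \<forall>v\<in>V. act 0 v = v"
  unfolding yd_object_def by (elim conjE) assumption

lemma yd_objectD7: "yd_object sc \<Phi> V cmp act \<Longrightarrow> \<forall>g e f. \<forall>v\<in>cmp g. act e (act f v) = sc (Phi_tilde \<Phi> g e f) (act (e + f) v)"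
  unfolding yd_object_def by (elim conjE) assumption

lemma yd_simpleD0: "yd_simple sc \<Phi> V cmp act \<Longrightarrow> yd_object sc \<Phi> V cmp act"
  unfolding yd_simple_def by (elim conjE) assumption

lemma yd_simpleD1: "yd_simple sc \<Phi> V cmp act \<Longrightarrow> V \<noteq> {0}"
  unfolding yd_simple_def by (elim conjE) assumption

lemma yd_simpleD2: "yd_simple sc \<Phi> V cmp act \<Longrightarrow> \<forall>U. yd_subobject sc U V cmp act \<longrightarrow> U = {0} \<or> U = V"
  unfolding yd_simple_def by (elim conjE) assumption


lemma delta_sum:
  fixes u :: "'a::comm_monoid_add"
  shows "(\<Sum>h\<in>(UNIV::'g::finite set). if h = g then u else 0) = u"
  by simp

lemma graded_subobject:
  assumes obj: "yd_object sc \<Phi> V cmp act" and g0: "cmp g0 = V"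
    and sub: "module.subspace sc U" and UV: "U \<subseteq> V"
    and st: "\<forall>e. \<forall>u\<in>U. act e u \<in> U"
  shows "yd_subobject sc U V cmp act"
proof -
  interpret vector_space sc using yd_objectD0[OF obj] .
  have cs: "\<And>g. subspace (cmp g)" using yd_objectD1[OF obj] by blast
  have eq: "U = {sum x UNIV | x. \<forall>g. x g \<in> U \<inter> cmp g}"
  proof
    show "U \<subseteq> {sum x UNIV | x. \<forall>g. x g \<in> U \<inter> cmp g}"
    proof
      fix u assume u: "u \<in> U"
      let ?x = "\<lambda>h. if h = g0 then u else 0"
      have xs: "\<forall>g. ?x g \<in> U \<inter> cmp g"
        using u UV g0 subspace_0[OF sub] subspace_0[OF cs] by auto
      have sx: "u = sum ?x UNIV" by simp
      show "u \<in> {sum x UNIV | x. \<forall>g. x g \<in> U \<inter> cmp g}"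
        unfolding mem_Collect_eq by (rule exI[where x="?x"], rule conjI[OF sx xs])
    qed
  next
    show "{sum x UNIV | x. \<forall>g. x g \<in> U \<inter> cmp g} \<subseteq> U"
    proof (rule subsetI)
      fix y assume "y \<in> {sum x UNIV | x. \<forall>g. x g \<in> U \<inter> cmp g}"
      then have "\<exists>x. y = sum x UNIV \<and> (\<forall>g. x g \<in> U \<inter> cmp g)" by simp
      then obtain x where "y = sum x UNIV" "\<forall>g. x g \<in> U \<inter> cmp g" by (elim exE conjE)
      then show "y \<in> U" using subspace_sum[OF sub, of UNIV x] by simp
    qed
  qed
  show ?thesis unfolding yd_subobject_def by (intro conjI sub UV eq st)
qed

lemma simple_degree:
  assumes simp: "yd_simple sc \<Phi> V cmp act"
  shows "cmp (yd_degree cmp V) = V"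
proof -
  have obj: "yd_object sc \<Phi> V cmp act" and nz: "V \<noteq> {0}"
    using yd_simpleD0[OF simp] yd_simpleD1[OF simp] .
  have sobj: "\<And>U. yd_subobject sc U V cmp act \<Longrightarrow> U = {0} \<or> U = V"
    using yd_simpleD2[OF simp] by simp
  interpret vector_space sc using yd_objectD0[OF obj] .
  have cs: "\<And>g. subspace (cmp g)" and cV: "\<And>g. cmp g \<subseteq> V"
    using yd_objectD1[OF obj] by simp_all
  have Vdef: "V = {sum x UNIV | x. \<forall>g. x g \<in> cmp g}" using yd_objectD2[OF obj] .
  have ds: "\<And>x. (\<forall>g. x g \<in> cmp g) \<Longrightarrow> sum x UNIV = 0 \<Longrightarrow> (\<forall>g. x g = 0)"
    using yd_objectD3[OF obj] by blast
  have st: "\<And>e g v. v \<in> cmp g \<Longrightarrow> act e v \<in> cmp g"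
    using yd_objectD4[OF obj] by blast
  have inter: "y = 0" if gh: "g \<noteq> h" and y: "y \<in> cmp g" "y \<in> cmp h" for g h y
  proof -
    let ?x = "\<lambda>k. if k = g then y else if k = h then -y else 0"
    have xin: "\<forall>k. ?x k \<in> cmp k"
      using y subspace_neg[OF cs] subspace_0[OF cs] by auto
    have "sum ?x UNIV = (\<Sum>k\<in>{g,h}. ?x k)"
      by (rule sum.mono_neutral_right) auto
    also have "\<dots> = 0" using gh by simp
    finally have "\<forall>k. ?x k = 0" by (rule ds[OF xin])
    then show "y = 0" by (metis (full_types))
  qed
  have sub_g: "cmp g = {0} \<or> cmp g = V" for g
  proof (rule sobj)
    have "cmp g = {sum x UNIV | x. \<forall>h. x h \<in> cmp g \<inter> cmp h}"
    proof
      show "cmp g \<subseteq> {sum x UNIV | x. \<forall>h. x h \<in> cmp g \<inter> cmp h}"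
      proof
        fix u assume u: "u \<in> cmp g"
        let ?x = "\<lambda>h. if h = g then u else 0"
        have xs: "\<forall>h. ?x h \<in> cmp g \<inter> cmp h"
          using u subspace_0[OF cs] by auto
        have sx: "u = sum ?x UNIV" by simp
        show "u \<in> {sum x UNIV | x. \<forall>h. x h \<in> cmp g \<inter> cmp h}"
          unfolding mem_Collect_eq by (rule exI[where x="?x"], rule conjI[OF sx xs])
      qed
    next
      show "{sum x UNIV | x. \<forall>h. x h \<in> cmp g \<inter> cmp h} \<subseteq> cmp g"
      proof (rule subsetI)
        fix y assume "y \<in> {sum x UNIV | x. \<forall>h. x h \<in> cmp g \<inter> cmp h}"
        then have "\<exists>x. y = sum x UNIV \<and> (\<forall>h. x h \<in> cmp g \<inter> cmp h)" by simp
        then obtain x where "y = sum x UNIV" "\<forall>h. x h \<in> cmp g \<inter> cmp h" by (elim exE conjE)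
        then show "y \<in> cmp g" using subspace_sum[OF cs[of g], of UNIV x] by simp
      qed
    qed
    then show "yd_subobject sc (cmp g) V cmp act"
      unfolding yd_subobject_def using cs cV st by (intro conjI) auto
  qed
  have z0: "0 \<in> V" using subspace_0[OF cs[of undefined]] cV[of undefined] by blast
  have ex: "\<exists>g. cmp g = V"
  proof (rule ccontr)
    assume "\<not> (\<exists>g. cmp g = V)"
    then have "\<forall>g. cmp g = {0}" using sub_g by blast
    then have "V \<subseteq> {0}" by (subst Vdef) auto
    then show False using nz z0 by blast
  qed
  have uniq: "g = h" if "cmp g = V" "cmp h = V" for g h
  proof (rule ccontr)
    assume "g \<noteq> h"
    have "V \<subseteq> {0}"
    proof
      fix y assume "y \<in> V"
      then have "y = 0" using inter[OF \<open>g \<noteq> h\<close>] that by simp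
      then show "y \<in> {0}" by simp
    qed
    then show False using nz z0 by blast
  qed
  have "\<exists>!g. cmp g = V" using ex uniq by blast
  then show ?thesis unfolding yd_degree_def by (rule theI')
qed



lemma obj_facts:
  assumes obj: "yd_object sc \<Phi> V cmp act" and g0: "cmp g0 = V"
  shows "vector_space sc" "module.subspace sc V"
    "\<And>e v. v \<in> V \<Longrightarrow> act e v \<in> V"
    "\<And>e u v. u \<in> V \<Longrightarrow> v \<in> V \<Longrightarrow> act e (u + v) = act e u + act e v"
    "\<And>e c v. v \<in> V \<Longrightarrow> act e (sc c v) = sc c (act e v)"
    "\<And>v. v \<in> V \<Longrightarrow> act 0 v = v"
    "\<And>e f v. v \<in> V \<Longrightarrow> act e (act f v) = sc (Phi_tilde \<Phi> g0 e f) (act (e + f) v)"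
proof -
  show vs: "vector_space sc" by (rule yd_objectD0[OF obj])
  interpret vector_space sc by fact
  show sub: "subspace V" using yd_objectD1[OF obj] g0 by metis
  show "\<And>e v. v \<in> V \<Longrightarrow> act e v \<in> V" using yd_objectD4[OF obj] g0 by blast
  have L: "\<And>e c u v. u \<in> V \<Longrightarrow> v \<in> V \<Longrightarrow> act e (sc c u + v) = sc c (act e u) + act e v"
    using yd_objectD5[OF obj] by blast
  show add: "\<And>e u v. u \<in> V \<Longrightarrow> v \<in> V \<Longrightarrow> act e (u + v) = act e u + act e v"
    using L[where c=1] by simp
  have z: "act e 0 = 0" for e using add[of 0 0 e] subspace_0[OF sub] by simp
  show "\<And>e c v. v \<in> V \<Longrightarrow> act e (sc c v) = sc c (act e v)"
    using L[where v=0] z subspace_0[OF sub] by (metis add_0_right)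
  show "\<And>v. v \<in> V \<Longrightarrow> act 0 v = v" using yd_objectD6[OF obj] by blast
  show "\<And>e f v. v \<in> V \<Longrightarrow> act e (act f v) = sc (Phi_tilde \<Phi> g0 e f) (act (e + f) v)"
    using yd_objectD7[OF obj] g0 by blast
qed

lemma alpha_nz: "normalized_3cocycle \<Phi> \<Longrightarrow> Phi_tilde \<Phi> g e f \<noteq> 0"
  unfolding normalized_3cocycle_def Phi_tilde_def by simp

lemma alpha_00: "normalized_3cocycle \<Phi> \<Longrightarrow> Phi_tilde \<Phi> g 0 0 = 1"
  unfolding normalized_3cocycle_def Phi_tilde_def by simp


theorem proposition4p3:
  fixes \<Phi> :: "'g::{ab_group_add,finite} \<Rightarrow> 'g \<Rightarrow> 'g \<Rightarrow> 'k::{alg_closed_field,field_char_0}"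
    and scV :: "'k \<Rightarrow> 'v::ab_group_add \<Rightarrow> 'v" and V :: "'v set"
    and compV :: "'g \<Rightarrow> 'v set" and actV :: "'g \<Rightarrow> 'v \<Rightarrow> 'v"
    and scW :: "'k \<Rightarrow> 'w::ab_group_add \<Rightarrow> 'w" and W :: "'w set"
    and compW :: "'g \<Rightarrow> 'w set" and actW :: "'g \<Rightarrow> 'w \<Rightarrow> 'w"
  assumes "normalized_3cocycle \<Phi>"
    and "yd_simple scV \<Phi> V compV actV"
    and "yd_simple scW \<Phi> W compW actW"
    and "yd_degree compV V = yd_degree compW W"
  shows "vector_space.dim scV V = vector_space.dim scW W"
proof -
  define g0 where "g0 = yd_degree compV V"
  have dV: "compV g0 = V" unfolding g0_def by (rule simple_degree[OF assms(2)])
  have dW: "compW g0 = W" unfolding g0_def assms(4) by (rule simple_degree[OF assms(3)])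
  have objV: "yd_object scV \<Phi> V compV actV" by (rule yd_simpleD0[OF assms(2)])
  have objW: "yd_object scW \<Phi> W compW actW" by (rule yd_simpleD0[OF assms(3)])
  note FV = obj_facts[OF objV dV] and FW = obj_facts[OF objW dW]
  interpret vV: vector_space scV by (rule FV(1))
  interpret vW: vector_space scW by (rule FW(1))
  define \<alpha> where "\<alpha> = Phi_tilde \<Phi> g0"
  have anz: "\<And>e f. \<alpha> e f \<noteq> 0" unfolding \<alpha>_def by (rule alpha_nz[OF assms(1)])
  have a00: "\<alpha> 0 0 = 1" unfolding \<alpha>_def by (rule alpha_00[OF assms(1)])
  have subV: "vV.subspace V" by (rule FV(2))
  have subW: "vW.subspace W" by (rule FW(2))
  have V0: "0 \<in> V" by (rule vV.subspace_0[OF subV])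
  have W0: "0 \<in> W" by (rule vW.subspace_0[OF subW])
  obtain v0 where v0: "v0 \<in> V" "v0 \<noteq> 0" using yd_simpleD1[OF assms(2)] V0 by blast
  obtain w0 where w0: "w0 \<in> W" "w0 \<noteq> 0" using yd_simpleD1[OF assms(3)] W0 by blast
  have TVin: "\<And>e v. v \<in> V \<Longrightarrow> actV e v \<in> V" by (rule FV(3))
  have TVadd: "\<And>e u v. u \<in> V \<Longrightarrow> v \<in> V \<Longrightarrow> actV e (u + v) = actV e u + actV e v" by (rule FV(4))
  have TVsc: "\<And>e c v. v \<in> V \<Longrightarrow> actV e (scV c v) = scV c (actV e v)" by (rule FV(5))
  have TV0: "\<And>v. v \<in> V \<Longrightarrow> actV 0 v = v" by (rule FV(6))
  have TVc: "\<And>e f v. v \<in> V \<Longrightarrow> actV e (actV f v) = scV (\<alpha> e f) (actV (e + f) v)"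
    unfolding \<alpha>_def by (rule FV(7))
  have TWin: "\<And>e v. v \<in> W \<Longrightarrow> actW e v \<in> W" by (rule FW(3))
  have TWadd: "\<And>e u v. u \<in> W \<Longrightarrow> v \<in> W \<Longrightarrow> actW e (u + v) = actW e u + actW e v" by (rule FW(4))
  have TWsc: "\<And>e c v. v \<in> W \<Longrightarrow> actW e (scW c v) = scW c (actW e v)" by (rule FW(5))
  have TW0: "\<And>v. v \<in> W \<Longrightarrow> actW 0 v = v" by (rule FW(6))
  have TWc: "\<And>e f v. v \<in> W \<Longrightarrow> actW e (actW f v) = scW (\<alpha> e f) (actW (e + f) v)"
    unfolding \<alpha>_def by (rule FW(7))
  have TVinv: "\<And>e v. v \<in> V \<Longrightarrow> actV (-e) (actV e v) = scV (\<alpha> (-e) e) v"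
    using TVc TV0 by simp
  have TWinv: "\<And>e v. v \<in> W \<Longrightarrow> actW (-e) (actW e v) = scW (\<alpha> (-e) e) v"
    using TWc TW0 by simp
  have TWz: "\<And>e. actW e 0 = 0" using TWadd[OF W0 W0] by simp
  have S1: "\<alpha> e f * \<alpha> (-f) (-e) * \<alpha> (-(e+f)) (e+f) = \<alpha> (-e) e * \<alpha> (-f) f" for e f
  proof -
    have fv: "actV f v0 \<in> V" using TVin v0 by blast
    have efv: "actV (e + f) v0 \<in> V" using TVin v0 by blast
    have "actV (-f) (actV (-e) (actV e (actV f v0))) = scV (\<alpha> (-e) e * \<alpha> (-f) f) v0"
      using TVinv[OF fv, of e] TVsc[OF fv] TVinv[OF v0(1), of f] by (simp add: mult.commute)
    moreover have "actV (-f) (actV (-e) (actV e (actV f v0))) = scV (\<alpha> e f * \<alpha> (-f) (-e) * \<alpha> (-(e+f)) (e+f)) v0"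
    proof -
      have "actV (-f) (actV (-e) (actV e (actV f v0))) = actV (-f) (actV (-e) (scV (\<alpha> e f) (actV (e + f) v0)))"
        using TVc[OF v0(1)] by simp
      also have "\<dots> = scV (\<alpha> e f) (actV (-f) (actV (-e) (actV (e + f) v0)))"
        using TVsc efv TVin by simp
      also have "\<dots> = scV (\<alpha> e f) (scV (\<alpha> (-f) (-e)) (actV (-(e+f)) (actV (e + f) v0)))"
        using TVc[OF efv, of "-f" "-e"] by (simp add: add.commute)
      also have "\<dots> = scV (\<alpha> e f * \<alpha> (-f) (-e) * \<alpha> (-(e+f)) (e+f)) v0"
        using TVinv[OF v0(1), of "e + f"] by simp
      finally show ?thesis .
    qed
    ultimately show ?thesis using v0(2) by simp
  qed

  define sm :: "'k \<Rightarrow> ('v \<Rightarrow> 'w) \<Rightarrow> ('v \<Rightarrow> 'w)" where "sm = (\<lambda>c \<phi> v. scW c (\<phi> v))"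
  have vsF: "vector_space sm"
    unfolding sm_def by unfold_locales (simp_all add: fun_eq_iff vW.scale_right_distrib vW.scale_left_distrib)
  interpret vF: vector_space sm by (rule vsF)
  define H where "H = {\<phi>. (\<forall>v. v \<notin> V \<longrightarrow> \<phi> v = 0) \<and> (\<forall>v\<in>V. \<phi> v \<in> W)
     \<and> (\<forall>u\<in>V. \<forall>v\<in>V. \<phi> (u + v) = \<phi> u + \<phi> v) \<and> (\<forall>c. \<forall>v\<in>V. \<phi> (scV c v) = scW c (\<phi> v))}"
  have Hout: "\<And>\<phi> v. \<phi> \<in> H \<Longrightarrow> v \<notin> V \<Longrightarrow> \<phi> v = 0" unfolding H_def by blast
  have HW: "\<And>\<phi> v. \<phi> \<in> H \<Longrightarrow> v \<in> V \<Longrightarrow> \<phi> v \<in> W" unfolding H_def by blast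
  have Hadd: "\<And>\<phi> u v. \<phi> \<in> H \<Longrightarrow> u \<in> V \<Longrightarrow> v \<in> V \<Longrightarrow> \<phi> (u + v) = \<phi> u + \<phi> v" unfolding H_def by blast
  have Hsc: "\<And>\<phi> c v. \<phi> \<in> H \<Longrightarrow> v \<in> V \<Longrightarrow> \<phi> (scV c v) = scW c (\<phi> v)" unfolding H_def by blast
  have HI: "\<phi> \<in> H" if "\<And>v. v \<notin> V \<Longrightarrow> \<phi> v = 0" "\<And>v. v \<in> V \<Longrightarrow> \<phi> v \<in> W"
    "\<And>u v. u \<in> V \<Longrightarrow> v \<in> V \<Longrightarrow> \<phi> (u + v) = \<phi> u + \<phi> v"
    "\<And>c v. v \<in> V \<Longrightarrow> \<phi> (scV c v) = scW c (\<phi> v)" for \<phi>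
    unfolding H_def using that by blast
  have Hz: "\<And>\<phi>. \<phi> \<in> H \<Longrightarrow> \<phi> 0 = 0" using Hadd[OF _ V0 V0] by simp
  have subH: "vF.subspace H"
  proof (rule vF.subspaceI)
    show "0 \<in> H" by (rule HI) (simp_all add: W0)
  next
    fix \<phi> \<psi> assume a: "\<phi> \<in> H" "\<psi> \<in> H"
    show "\<phi> + \<psi> \<in> H"
    proof (rule HI)
      show "(\<phi> + \<psi>) v = 0" if "v \<notin> V" for v using Hout[OF a(1) that] Hout[OF a(2) that] by simp
      show "(\<phi> + \<psi>) v \<in> W" if "v \<in> V" for v using a that HW vW.subspace_add[OF subW] by simp
      show "(\<phi> + \<psi>) (u + v) = (\<phi> + \<psi>) u + (\<phi> + \<psi>) v" if "u \<in> V" "v \<in> V" for u v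
        using Hadd[OF a(1) that] Hadd[OF a(2) that] by (simp add: add_ac)
      show "(\<phi> + \<psi>) (scV c v) = scW c ((\<phi> + \<psi>) v)" if "v \<in> V" for c v
        using Hsc[OF a(1) that] Hsc[OF a(2) that] by (simp add: vW.scale_right_distrib)
    qed
  next
    fix c \<phi> assume a: "\<phi> \<in> H"
    show "sm c \<phi> \<in> H"
    proof (rule HI)
      show "sm c \<phi> v = 0" if "v \<notin> V" for v using a that Hout by (simp add: sm_def)
      show "sm c \<phi> v \<in> W" if "v \<in> V" for v using a that HW vW.subspace_scale[OF subW] by (simp add: sm_def)
      show "sm c \<phi> (u + v) = sm c \<phi> u + sm c \<phi> v" if "u \<in> V" "v \<in> V" for u v
        using Hadd[OF a that] by (simp add: sm_def vW.scale_right_distrib)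
      show "sm c \<phi> (scV d v) = scW d (sm c \<phi> v)" if "v \<in> V" for d v
        using Hsc[OF a that] by (simp add: sm_def vW.scale_left_commute)
    qed
  qed

  define a where "a = (\<lambda>e. inverse (\<alpha> (-e) e))"
  have anz': "\<And>e. a e \<noteq> 0" unfolding a_def using anz by simp
  define \<rho> where "\<rho> = (\<lambda>e \<phi> v. if v \<in> V then scW (a e) (actW e (\<phi> (actV (-e) v))) else 0)"
  have \<rho>V: "\<And>e \<phi> v. v \<in> V \<Longrightarrow> \<rho> e \<phi> v = scW (a e) (actW e (\<phi> (actV (-e) v)))"
    unfolding \<rho>_def by simp
  have \<rho>out: "\<And>e \<phi> v. v \<notin> V \<Longrightarrow> \<rho> e \<phi> v = 0"
    unfolding \<rho>_def by simp
  have \<rho>H: "\<rho> e \<phi> \<in> H" if ph: "\<phi> \<in> H" for e \<phi>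
  proof (rule HI)
    show "\<rho> e \<phi> v = 0" if "v \<notin> V" for v using \<rho>out[OF that] .
    show "\<rho> e \<phi> v \<in> W" if "v \<in> V" for v
      unfolding \<rho>V[OF that] using HW[OF ph TVin[OF that]] TWin vW.subspace_scale[OF subW] by blast
    show "\<rho> e \<phi> (u + v) = \<rho> e \<phi> u + \<rho> e \<phi> v" if u: "u \<in> V" and v: "v \<in> V" for u v
    proof -
      have uv: "u + v \<in> V" using vV.subspace_add[OF subV u v] .
      have "\<rho> e \<phi> (u + v) = scW (a e) (actW e (\<phi> (actV (-e) u) + \<phi> (actV (-e) v)))"
        unfolding \<rho>V[OF uv] TVadd[OF u v] Hadd[OF ph TVin[OF u] TVin[OF v]] ..
      also have "\<dots> = \<rho> e \<phi> u + \<rho> e \<phi> v"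
        unfolding \<rho>V[OF u] \<rho>V[OF v]
        using TWadd[OF HW[OF ph TVin[OF u]] HW[OF ph TVin[OF v]]] by (simp add: vW.scale_right_distrib)
      finally show ?thesis .
    qed
    show "\<rho> e \<phi> (scV c v) = scW c (\<rho> e \<phi> v)" if v: "v \<in> V" for c v
    proof -
      have cv: "scV c v \<in> V" using vV.subspace_scale[OF subV v] .
      show ?thesis
        unfolding \<rho>V[OF cv] \<rho>V[OF v] TVsc[OF v] Hsc[OF ph TVin[OF v]] TWsc[OF HW[OF ph TVin[OF v]]]
        by (simp add: vW.scale_left_commute)
    qed
  qed
  have \<rho>add: "\<rho> e (\<phi> + \<psi>) = \<rho> e \<phi> + \<rho> e \<psi>" if "\<phi> \<in> H" "\<psi> \<in> H" for e \<phi> \<psi>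
  proof (rule ext)
    fix v show "\<rho> e (\<phi> + \<psi>) v = (\<rho> e \<phi> + \<rho> e \<psi>) v"
    proof (cases "v \<in> V")
      case True
      then show ?thesis unfolding plus_fun_apply \<rho>V[OF True]
        using TWadd[OF HW[OF that(1) TVin[OF True]] HW[OF that(2) TVin[OF True]]]
        by (simp add: vW.scale_right_distrib)
    qed (simp add: \<rho>out)
  qed
  have \<rho>sc: "\<rho> e (sm c \<phi>) = sm c (\<rho> e \<phi>)" if "\<phi> \<in> H" for e c \<phi>
  proof (rule ext)
    fix v show "\<rho> e (sm c \<phi>) v = sm c (\<rho> e \<phi>) v"
    proof (cases "v \<in> V")
      case True
      then show ?thesis unfolding sm_def \<rho>V[OF True]
        using TWsc[OF HW[OF that TVin[OF True]]] by (simp add: vW.scale_left_commute)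
    qed (simp add: \<rho>out sm_def)
  qed
  have \<rho>comp: "\<rho> e (\<rho> f \<phi>) = \<rho> (e + f) \<phi>" if ph: "\<phi> \<in> H" for e f \<phi>
  proof (rule ext)
    fix v show "\<rho> e (\<rho> f \<phi>) v = \<rho> (e + f) \<phi> v"
    proof (cases "v \<in> V")
      case True
      have x: "actV (-e) v \<in> V" using TVin[OF True] .
      have y: "actV (-(e+f)) v \<in> V" using TVin[OF True] .
      have z: "\<phi> (actV (-(e+f)) v) \<in> W" using HW[OF ph y] .
      have c1: "actV (-f) (actV (-e) v) = scV (\<alpha> (-f) (-e)) (actV (-(e+f)) v)"
        using TVc[OF True, of "-f" "-e"] by (simp add: add.commute)
      have "\<rho> e (\<rho> f \<phi>) v = scW (a e) (actW e (scW (a f) (actW f (scW (\<alpha> (-f) (-e)) (\<phi> (actV (-(e+f)) v))))))"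
        unfolding \<rho>V[OF True] \<rho>V[OF x] c1 Hsc[OF ph y] ..
      also have "\<dots> = scW (a e * a f * \<alpha> (-f) (-e) * \<alpha> e f) (actW (e + f) (\<phi> (actV (-(e+f)) v)))"
        using TWsc[OF z] TWsc[OF TWin[OF z]] TWc[OF z] by (simp add: mult_ac)
      also have "a e * a f * \<alpha> (-f) (-e) * \<alpha> e f = a (e + f)"
      proof -
        have "\<alpha> e f * \<alpha> (-f) (-e) * \<alpha> (-(e+f)) (e+f) = \<alpha> (-e) e * \<alpha> (-f) f" by (rule S1)
        then show ?thesis unfolding a_def using anz by (simp add: field_simps)
      qed
      finally show ?thesis unfolding \<rho>V[OF True] .
    qed (simp add: \<rho>out)
  qed
  have \<rho>0: "\<rho> 0 \<phi> = \<phi>" if ph: "\<phi> \<in> H" for \<phi>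
  proof (rule ext)
    fix v show "\<rho> 0 \<phi> v = \<phi> v"
    proof (cases "v \<in> V")
      case True
      then show ?thesis unfolding \<rho>V[OF True] a_def using TV0[OF True] TW0[OF HW[OF ph True]] a00 by simp
    qed (simp add: \<rho>out Hout[OF ph])
  qed
  have \<rho>comm: "\<rho> e (\<rho> f \<phi>) = \<rho> f (\<rho> e \<phi>)" if "\<phi> \<in> H" for e f \<phi>
    using \<rho>comp[OF that, of e f] \<rho>comp[OF that, of f e] by (simp add: add.commute)
  define nm where "nm = (\<lambda>k e. ((+) e ^^ k) (0::'g))"
  have nm_add: "nm (i + j) e = nm i e + nm j e" for i j e
    unfolding nm_def by (induction i) (simp_all add: add.assoc)
  have \<rho>pow: "(\<rho> e ^^ k) \<phi> = \<rho> (nm k e) \<phi>" if ph: "\<phi> \<in> H" for e k \<phi>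
  proof (induction k)
    case 0 then show ?case using \<rho>0[OF ph] by (simp add: nm_def)
  next
    case (Suc k) then show ?case using \<rho>comp[OF ph] by (simp add: nm_def)
  qed
  have \<rho>per: "\<exists>m>0. \<forall>\<phi>\<in>H. (\<rho> e ^^ m) \<phi> = \<phi>" for e
  proof -
    have "\<not> inj (\<lambda>k. nm k e)"
    proof
      assume "inj (\<lambda>k. nm k e)"
      moreover have "finite (range (\<lambda>k. nm k e))" by simp
      ultimately have "finite (UNIV :: nat set)" using finite_imageD by blast
      then show False by simp
    qed
    then obtain i j where ij: "i \<noteq> j" "nm i e = nm j e" unfolding inj_def by blast
    have "\<exists>m>0. nm m e = 0"
    proof (cases "i < j")
      case True
      have "nm j e = nm (j - i) e + nm i e" using nm_add[of "j - i" i e] True by simp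
      then show ?thesis using ij True by (intro exI[of _ "j - i"]) simp
    next
      case False
      then have "j < i" using ij by simp
      have "nm i e = nm (i - j) e + nm j e" using nm_add[of "i - j" j e] \<open>j < i\<close> by simp
      then show ?thesis using ij \<open>j < i\<close> by (intro exI[of _ "i - j"]) simp
    qed
    then obtain m where "m > 0" "nm m e = 0" by blast
    then show ?thesis using \<rho>pow \<rho>0 by auto
  qed

  obtain B where B: "B \<subseteq> V" "vV.independent B" "V \<subseteq> vV.span B"
    using vV.basis_exists by metis
  have spB: "vV.span B = V" by (rule vV.span_subspace[OF B(1) B(3) subV])
  obtain b0 where b0: "b0 \<in> B"
  proof (cases "B = {}")
    case True
    then have "V \<subseteq> {0}" using B(3) by simp
    then show ?thesis using v0 by blast
  qed blast
  define \<phi>0 where "\<phi>0 = (\<lambda>v. if v \<in> V then scW (vV.representation B v b0) w0 else 0)"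
  have \<phi>0H: "\<phi>0 \<in> H"
  proof (rule HI)
    show "\<phi>0 v = 0" if "v \<notin> V" for v using that by (simp add: \<phi>0_def)
    show "\<phi>0 v \<in> W" if "v \<in> V" for v using that w0 vW.subspace_scale[OF subW] by (simp add: \<phi>0_def)
    show "\<phi>0 (u + v) = \<phi>0 u + \<phi>0 v" if "u \<in> V" "v \<in> V" for u v
    proof -
      have "u + v \<in> V" using vV.subspace_add[OF subV that] .
      moreover have "vV.representation B (u + v) = (\<lambda>b. vV.representation B u b + vV.representation B v b)"
        by (rule vV.representation_add[OF B(2)]) (use that spB in auto)
      ultimately show ?thesis using that by (simp add: \<phi>0_def vW.scale_left_distrib)
    qed
    show "\<phi>0 (scV c v) = scW c (\<phi>0 v)" if "v \<in> V" for c v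
    proof -
      have "scV c v \<in> V" using vV.subspace_scale[OF subV that] .
      moreover have "vV.representation B (scV c v) = (\<lambda>b. c * vV.representation B v b)"
        by (rule vV.representation_scale[OF B(2)]) (use that spB in auto)
      ultimately show ?thesis using that by (simp add: \<phi>0_def)
    qed
  qed
  have \<phi>0nz: "\<phi>0 \<noteq> 0"
  proof
    assume "\<phi>0 = 0"
    then have "\<phi>0 b0 = 0" by simp
    moreover have "b0 \<in> V" using b0 B(1) by blast
    ultimately show False using vV.representation_basis[OF B(2) b0] w0 by (simp add: \<phi>0_def)
  qed
  have inv: "\<forall>e. \<forall>x\<in>H. \<rho> e x \<in> H" using \<rho>H by blast
  have "\<exists>y\<in>H. y \<noteq> 0 \<and> (\<forall>e\<in>UNIV. \<exists>c. \<rho> e y = sm c y)"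
    by (rule common_eigen[OF vsF \<rho>add \<rho>sc \<rho>comm \<rho>per finite_UNIV subH subset_refl inv \<phi>0H \<phi>0nz])
  then obtain \<phi> where \<phi>: "\<phi> \<in> H" "\<phi> \<noteq> 0" "\<forall>e\<in>UNIV. \<exists>c. \<rho> e \<phi> = sm c \<phi>"
    by (elim bexE conjE) (intro that)
  have "\<forall>e. \<exists>c. \<rho> e \<phi> = sm c \<phi>" using \<phi>(3) by simp
  from choice[OF this] obtain \<chi> where \<chi>: "\<forall>e. \<rho> e \<phi> = sm (\<chi> e) \<phi>" by (elim exE)

  have key: "actW e (\<phi> v) = scW (\<chi> e) (\<phi> (actV e v))" if v: "v \<in> V" for e v
  proof -
    have ev: "actV e v \<in> V" using TVin[OF v] .
    have "\<rho> e \<phi> (actV e v) = scW (\<chi> e) (\<phi> (actV e v))" using \<chi> by (simp add: sm_def)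
    moreover have "\<rho> e \<phi> (actV e v) = actW e (\<phi> v)"
      unfolding \<rho>V[OF ev] TVinv[OF v] Hsc[OF \<phi>(1) v] TWsc[OF HW[OF \<phi>(1) v]]
      using anz by (simp add: a_def)
    ultimately show ?thesis by simp
  qed
  obtain v1 where v1: "v1 \<in> V" "\<phi> v1 \<noteq> 0"
  proof -
    obtain v where "\<phi> v \<noteq> 0" using \<phi>(2) by (metis zero_fun_apply ext)
    moreover then have "v \<in> V" using Hout[OF \<phi>(1)] by blast
    ultimately show ?thesis using that by blast
  qed
  have \<chi>nz: "\<chi> e \<noteq> 0" for e
  proof
    assume "\<chi> e = 0"
    then have "actW e (\<phi> v1) = 0" using key[OF v1(1), of e] by simp
    then have "actW (-e) (actW e (\<phi> v1)) = 0" using TWz by simp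
    then have "scW (\<alpha> (-e) e) (\<phi> v1) = 0" using TWinv[OF HW[OF \<phi>(1) v1(1)]] by simp
    then show False using anz v1(2) by simp
  qed
  define K where "K = {v \<in> V. \<phi> v = 0}"
  have subK: "vV.subspace K"
  proof (rule vV.subspaceI)
    show "0 \<in> K" unfolding K_def using V0 Hz[OF \<phi>(1)] by simp
    show "x + y \<in> K" if "x \<in> K" "y \<in> K" for x y
      using that vV.subspace_add[OF subV] Hadd[OF \<phi>(1)] unfolding K_def by simp
    show "scV c x \<in> K" if "x \<in> K" for c x
      using that vV.subspace_scale[OF subV] Hsc[OF \<phi>(1)] unfolding K_def by simp
  qed
  have stK: "\<forall>e. \<forall>u\<in>K. actV e u \<in> K"
  proof (intro allI ballI)
    fix e u assume u: "u \<in> K"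
    then have uV: "u \<in> V" and "\<phi> u = 0" unfolding K_def by auto
    then have "scW (\<chi> e) (\<phi> (actV e u)) = 0" using key[OF uV, of e] TWz by simp
    then show "actV e u \<in> K" unfolding K_def using \<chi>nz TVin[OF uV] by simp
  qed
  have "yd_subobject scV K V compV actV"
    by (rule graded_subobject[OF objV dV subK _ stK]) (auto simp: K_def)
  then have "K = {0} \<or> K = V" using yd_simpleD2[OF assms(2)] by blast
  moreover have "K \<noteq> V" using v1 unfolding K_def by blast
  ultimately have K0: "K = {0}" by blast
  have inj: "inj_on \<phi> V"
  proof (rule inj_onI)
    fix u v assume u: "u \<in> V" and v: "v \<in> V" and e: "\<phi> u = \<phi> v"
    have mv: "scV (-1) v \<in> V" using vV.subspace_scale[OF subV v] .
    have uv: "u + scV (-1) v \<in> V" using vV.subspace_add[OF subV u mv] .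
    have "\<phi> (u + scV (-1) v) = 0" unfolding Hadd[OF \<phi>(1) u mv] Hsc[OF \<phi>(1) v] e by simp
    then have "u + scV (-1) v \<in> K" using uv unfolding K_def by simp
    then have "u + scV (-1) v = 0" using K0 by simp
    then show "u = v" by (simp add: add_eq_0_iff2)
  qed
  define I where "I = \<phi> ` V"
  have subI: "vW.subspace I"
  proof (rule vW.subspaceI)
    show "0 \<in> I" unfolding I_def using V0 Hz[OF \<phi>(1)] by (metis image_eqI)
    show "x + y \<in> I" if xy: "x \<in> I" "y \<in> I" for x y
    proof -
      obtain u v where "u \<in> V" "v \<in> V" "x = \<phi> u" "y = \<phi> v" using xy unfolding I_def by blast
      then show ?thesis unfolding I_def using Hadd[OF \<phi>(1)] vV.subspace_add[OF subV] by (metis image_eqI)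
    qed
    show "scW c x \<in> I" if xI: "x \<in> I" for c x
    proof -
      obtain u where "u \<in> V" "x = \<phi> u" using xI unfolding I_def by blast
      then show ?thesis unfolding I_def using Hsc[OF \<phi>(1)] vV.subspace_scale[OF subV] by (metis image_eqI)
    qed
  qed
  have stI: "\<forall>e. \<forall>u\<in>I. actW e u \<in> I"
  proof (intro allI ballI)
    fix e x assume "x \<in> I"
    then obtain u where u: "u \<in> V" "x = \<phi> u" unfolding I_def by blast
    have "actW e x = \<phi> (scV (\<chi> e) (actV e u))" unfolding u(2) key[OF u(1)] Hsc[OF \<phi>(1) TVin[OF u(1)]] ..
    then show "actW e x \<in> I" unfolding I_def using vV.subspace_scale[OF subV TVin[OF u(1)]] by simp
  qed
  have "yd_subobject scW I W compW actW"
    by (rule graded_subobject[OF objW dW subI _ stI]) (auto simp: I_def HW[OF \<phi>(1)])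
  then have "I = {0} \<or> I = W" using yd_simpleD2[OF assms(3)] by blast
  moreover have "I \<noteq> {0}" using v1 unfolding I_def by blast
  ultimately have IW: "\<phi> ` V = W" unfolding I_def by blast
  show ?thesis
    by (rule dim_transfer[OF FV(1) FW(1) subV _ _ inj IW]) (use Hadd[OF \<phi>(1)] Hsc[OF \<phi>(1)] in auto)
qed

end
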